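(* Let $G$ be a 2-arc-colored directed multigraph. If $C$ is a minimal PC Euler subgraph of $G$, then for every vertex $v\in V(C)$, $d^+_{1,C}(v)\le 1$ and $d^+_{2,C}(v)\le 1$.
   Context: $G$ has an arbitrary arc coloring $\phi:A(G)\to\{1,2\}$. Trails are directed walks without repeated arcs; a closed trail is properly colored (PC) if every two consecutive arcs, including the last and first arcs, have different colors. A (multi)digraph is PC Euler if it has a PC closed trail containing all of its arcs. A PC Euler subgraph of $G$ is a subgraph (with at least one arc) that is PC Euler; it is minimal if no proper subgraph of it is PC Euler. $d^+_{i,C}(v)$ is the number of arcs of color $i$ in $C$ leaving $v$. *)

theory Defs
  imports Main
begin

(* A directed multigraph: arcs are identifiers of type 'e with tail function tail
   and head function head (parallel arcs and loops allowed).  A subgraph is given by its arc set. *)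

definition pc_closed_trail :: "('e \<Rightarrow> 'v) \<Rightarrow> ('e \<Rightarrow> 'v) \<Rightarrow> ('e \<Rightarrow> nat) \<Rightarrow> 'e list \<Rightarrow> bool" where
  "pc_closed_trail tail head col T \<longleftrightarrow>
     T \<noteq> [] \<and> distinct T \<and>
     (\<forall>i < length T. head (T ! i) = tail (T ! (Suc i mod length T)) \<and>
                      col (T ! i) \<noteq> col (T ! (Suc i mod length T)))"

definition pc_euler :: "('e \<Rightarrow> 'v) \<Rightarrow> ('e \<Rightarrow> 'v) \<Rightarrow> ('e \<Rightarrow> nat) \<Rightarrow> 'e set \<Rightarrow> bool" where
  "pc_euler tail head col C \<longleftrightarrow> C \<noteq> {} \<and> (\<exists>T. pc_closed_trail tail head col T \<and> set T = C)"

definition minimal_pc_euler_subgraph ::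
  "'e set \<Rightarrow> ('e \<Rightarrow> 'v) \<Rightarrow> ('e \<Rightarrow> 'v) \<Rightarrow> ('e \<Rightarrow> nat) \<Rightarrow> 'e set \<Rightarrow> bool" where
  "minimal_pc_euler_subgraph A tail head col C \<longleftrightarrow>
     C \<subseteq> A \<and> pc_euler tail head col C \<and> (\<forall>C'. C' \<subset> C \<longrightarrow> \<not> pc_euler tail head col C')"

definition out_deg_col :: "('e \<Rightarrow> 'v) \<Rightarrow> ('e \<Rightarrow> nat) \<Rightarrow> 'e set \<Rightarrow> nat \<Rightarrow> 'v \<Rightarrow> nat" where
  "out_deg_col tail col C i v = card {a \<in> C. tail a = v \<and> col a = i}"

definition verts_of :: "('e \<Rightarrow> 'v) \<Rightarrow> ('e \<Rightarrow> 'v) \<Rightarrow> 'e set \<Rightarrow> 'v set" where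
  "verts_of tail head C = tail ` C \<union> head ` C"

end

theory Submission
  imports Defs
begin

lemma sub_trail:
  assumes T: "pc_closed_trail tail head col T"
    and ij: "i < j" "j < length T"
    and tl: "tail (T ! i) = tail (T ! j)" and cl: "col (T ! i) = col (T ! j)"
  shows "pc_closed_trail tail head col (take (j - i) (drop i T))"
proof -
  let ?S = "take (j - i) (drop i T)"
  have len: "length ?S = j - i" using ij by simp
  have nth: "\<And>k. k < j - i \<Longrightarrow> ?S ! k = T ! (i + k)" using ij by simp
  have P: "\<And>k. k < length T \<Longrightarrow> head (T ! k) = tail (T ! (Suc k mod length T)) \<and>
       col (T ! k) \<noteq> col (T ! (Suc k mod length T))"
    using T unfolding pc_closed_trail_def by blast
  have "\<forall>k < length ?S. head (?S ! k) = tail (?S ! (Suc k mod length ?S)) \<and>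
                      col (?S ! k) \<noteq> col (?S ! (Suc k mod length ?S))"
  proof (intro allI impI)
    fix k assume k: "k < length ?S"
    show "head (?S ! k) = tail (?S ! (Suc k mod length ?S)) \<and>
                      col (?S ! k) \<noteq> col (?S ! (Suc k mod length ?S))"
    proof (cases "Suc k < j - i")
      case True
      have "Suc (i + k) mod length T = Suc (i + k)" using True ij by simp
      then show ?thesis using P[of "i+k"] True ij k len nth[of k] nth[of "Suc k"] by simp
    next
      case False
      hence kk: "Suc k = j - i" using k len by simp
      have "Suc (i + k) mod length T = j" using kk ij by simp
      moreover have "Suc k mod length ?S = 0" using kk len by simp
      ultimately show ?thesis using P[of "i+k"] ij k len nth[of k] nth[of 0] tl cl kk
        by (simp add: add.commute)
    qed
  qed
  moreover have "?S \<noteq> []" using ij by simp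
  moreover have "distinct ?S" using T unfolding pc_closed_trail_def by (simp add: distinct_take)
  ultimately show ?thesis unfolding pc_closed_trail_def by blast
qed

lemma deg_le1:
  assumes "minimal_pc_euler_subgraph A tail head col C"
  shows "out_deg_col tail col C c v \<le> 1"
proof (rule ccontr)
  assume neg: "\<not> ?thesis"
  obtain T where T: "pc_closed_trail tail head col T" and sT: "set T = C"
    using assms unfolding minimal_pc_euler_subgraph_def pc_euler_def by blast
  have dT: "distinct T" using T unfolding pc_closed_trail_def by blast
  let ?X = "{a \<in> C. tail a = v \<and> col a = c}"
  have "1 < card ?X" using neg unfolding out_deg_col_def by simp
  hence "\<not> card ?X \<le> Suc 0" by simp
  hence "\<exists>a\<in>?X. \<exists>b\<in>?X. a \<noteq> b" using card_le_Suc0_iff_eq[of ?X] card.infinite[of ?X] by fastforce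
  then obtain a b where ab: "a \<in> ?X" "b \<in> ?X" "a \<noteq> b" by blast
  obtain p where p: "p < length T" "T ! p = a" using ab sT by (metis in_set_conv_nth mem_Collect_eq)
  obtain q where q: "q < length T" "T ! q = b" using ab sT by (metis in_set_conv_nth mem_Collect_eq)
  have pq: "p \<noteq> q" using p q ab by auto
  define i where "i = min p q"
  define j where "j = max p q"
  have ij: "i < j" "j < length T" using pq p q unfolding i_def j_def by auto
  have tl: "tail (T ! i) = tail (T ! j)" and cl: "col (T ! i) = col (T ! j)"
    using ab p q unfolding i_def j_def by (auto simp: min_def max_def)
  let ?S = "take (j - i) (drop i T)"
  have S: "pc_closed_trail tail head col ?S" using sub_trail[OF T ij tl cl] .
  have sub: "set ?S \<subseteq> C" using sT by (meson set_drop_subset set_take_subset subset_trans)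
  have "T ! j \<notin> set ?S"
  proof
    assume "T ! j \<in> set ?S"
    then obtain k where k: "k < j - i" "?S ! k = T ! j" using ij by (auto simp: in_set_conv_nth)
    hence "T ! (i + k) = T ! j" using ij by simp
    hence "i + k = j" using dT ij k by (simp add: nth_eq_iff_index_eq)
    thus False using k by simp
  qed
  moreover have "T ! j \<in> C" using sT ij by auto
  ultimately have "set ?S \<subset> C" using sub by blast
  moreover have "pc_euler tail head col (set ?S)"
    unfolding pc_euler_def proof (intro conjI exI)
    show "set ?S \<noteq> {}" using ij by simp
  qed (use S in auto)
  ultimately show False using assms unfolding minimal_pc_euler_subgraph_def by blast
qed

theorem lemma2:
  fixes A :: "'e set" and tail head :: "'e \<Rightarrow> 'v" and col :: "'e \<Rightarrow> nat" and C :: "'e set"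
  assumes "finite A"
    and "col ` A \<subseteq> {1, 2}"
    and "minimal_pc_euler_subgraph A tail head col C"
  shows "\<forall>v \<in> verts_of tail head C. out_deg_col tail col C 1 v \<le> 1 \<and> out_deg_col tail col C 2 v \<le> 1"
  using deg_le1[OF assms(3)] by blast

end
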